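(* Let $G=(V,E,c)$ and $t:V\to\mathbb{R}_{\ge 0}$, and let $F$ and $(y_S)_{S\subseteq V}$ be the output forest and final growth values of shadow moat growing on $(G,t)$. Then for every vertex $v\in V$, $$c(F)\le 2\sum_{S\subseteq V,\ v\notin S} y_S .$$
   Context: $G=(V,E,c)$ is an undirected graph with edge costs $c:E\to\mathbb{R}_{\ge0}$; for $S\subseteq V$, $\delta(S)$ is the set of edges with exactly one endpoint in $S$, and $c(F)=\sum_{e\in F}c_e$. Shadow moat growing on $(G,t)$, for a "fingerprint" $t:V\to\mathbb{R}_{\ge0}$, is the following continuous process in time $\tau\ge 0$. It maintains a forest $F$ (initially empty), the partition of $V$ into connected components of $(V,F)$, and values $y_S\ge 0$ for all $S\subseteq V$ (initially $0$). At time $\tau$ a component $C$ is active iff it contains a vertex $w$ with $t_w>\tau$. Every active component $C$ increases $y_C$ at rate $1$; other $y_S$ stay fixed. Whenever an edge $e$ whose endpoints lie in different components satisfies $\sum_{S:\,e\in\delta(S)}y_S=c_e$, $e$ is added to $F$ and the two components merge (simultaneous events are processed one at a time by a fixed rule; edges whose endpoints are already in a common component are skipped). The process stops when no component is active. Finally, in a pruning phase, let $\mathcal D$ be the family of all vertex sets that were an inactive component at some moment; while some $S\in\mathcal D$ has $|\delta(S)\cap F|=1$, the unique edge of $\delta(S)\cap F$ is removed from $F$. The remaining $F$ is the output; $y_S$ denotes the final growth values. *)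

theory Defs
  imports Complex_Main
begin

definition delta :: "'a set set \<Rightarrow> 'a set \<Rightarrow> 'a set set" where
  "delta E S = {e \<in> E. card (e \<inter> S) = 1}"

definition cost :: "('a set \<Rightarrow> real) \<Rightarrow> 'a set set \<Rightarrow> real" where
  "cost c F = (\<Sum>e\<in>F. c e)"

definition is_graph :: "'a set \<Rightarrow> 'a set set \<Rightarrow> bool" where
  "is_graph V E \<longleftrightarrow> finite V \<and> (\<forall>e\<in>E. \<exists>u w. u \<in> V \<and> w \<in> V \<and> u \<noteq> w \<and> e = {u, w})"

definition comp :: "'a set \<Rightarrow> 'a set set \<Rightarrow> 'a \<Rightarrow> 'a set" where
  "comp V F v = {w \<in> V. (v, w) \<in> {(a, b). {a, b} \<in> F}\<^sup>*}"

definition components :: "'a set \<Rightarrow> 'a set set \<Rightarrow> 'a set set" where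
  "components V F = comp V F ` V"

definition active :: "('a \<Rightarrow> real) \<Rightarrow> real \<Rightarrow> 'a set \<Rightarrow> bool" where
  "active t \<tau> C \<longleftrightarrow> (\<exists>w\<in>C. t w > \<tau>)"

definition load :: "'a set \<Rightarrow> 'a set set \<Rightarrow> ('a set \<Rightarrow> real) \<Rightarrow> 'a set \<Rightarrow> real" where
  "load V E y e = (\<Sum>S | S \<subseteq> V \<and> e \<in> delta E S. y S)"

definition cross :: "'a set \<Rightarrow> 'a set set \<Rightarrow> 'a set set \<Rightarrow> 'a set \<Rightarrow> bool" where
  "cross V E F e \<longleftrightarrow> e \<in> E \<and> (\<forall>C\<in>components V F. \<not> e \<subseteq> C)"

definition tight :: "'a set \<Rightarrow> 'a set set \<Rightarrow> ('a set \<Rightarrow> real) \<Rightarrow> ('a set \<Rightarrow> real)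
    \<Rightarrow> 'a set set \<Rightarrow> 'a set \<Rightarrow> bool" where
  "tight V E c y F e \<longleftrightarrow> cross V E F e \<and> load V E y e = c e"

text \<open>States of the growth phase: (current time, current forest, current y).\<close>
type_synonym 'a smg_state = "real \<times> 'a set set \<times> ('a set \<Rightarrow> real)"

text \<open>One step of the growth phase: either continuous growth for a positive
  duration d (no pending tight edge, no activity change strictly inside the
  interval, no edge overshooting its cost), or adding a tight edge (any choice
  of tight edge, i.e. an arbitrary tie-breaking rule).\<close>
inductive smg_step :: "'a set \<Rightarrow> 'a set set \<Rightarrow> ('a set \<Rightarrow> real) \<Rightarrow> ('a \<Rightarrow> real)
    \<Rightarrow> 'a smg_state \<Rightarrow> 'a smg_state \<Rightarrow> bool"
  for V E c t where
  grow: "\<lbrakk> d > 0;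
           \<exists>C\<in>components V F. active t \<tau> C;
           \<forall>e. \<not> tight V E c y F e;
           \<forall>w\<in>V. \<not> (\<tau> < t w \<and> t w < \<tau> + d);
           y' = (\<lambda>S. if S \<in> components V F \<and> active t \<tau> S then y S + d else y S);
           \<forall>e. cross V E F e \<longrightarrow> load V E y' e \<le> c e \<rbrakk>
         \<Longrightarrow> smg_step V E c t (\<tau>, F, y) (\<tau> + d, F, y')"
| merge: "tight V E c y F e \<Longrightarrow> smg_step V E c t (\<tau>, F, y) (\<tau>, insert e F, y)"

definition smg_final :: "'a set \<Rightarrow> 'a set set \<Rightarrow> ('a set \<Rightarrow> real) \<Rightarrow> ('a \<Rightarrow> real)
    \<Rightarrow> 'a smg_state \<Rightarrow> bool" where
  "smg_final V E c t st = (case st of (\<tau>, F, y) \<Rightarrow>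
     (\<forall>C\<in>components V F. \<not> active t \<tau> C) \<and> (\<forall>e. \<not> tight V E c y F e))"

definition smg_run :: "'a set \<Rightarrow> 'a set set \<Rightarrow> ('a set \<Rightarrow> real) \<Rightarrow> ('a \<Rightarrow> real)
    \<Rightarrow> 'a smg_state list \<Rightarrow> bool" where
  "smg_run V E c t xs \<longleftrightarrow> xs \<noteq> [] \<and> hd xs = (0, {}, (\<lambda>S. 0))
     \<and> (\<forall>i. Suc i < length xs \<longrightarrow> smg_step V E c t (xs ! i) (xs ! Suc i))
     \<and> smg_final V E c t (last xs)"

definition inactive_family :: "'a set \<Rightarrow> ('a \<Rightarrow> real) \<Rightarrow> 'a smg_state list \<Rightarrow> 'a set set" where
  "inactive_family V t xs =
     {C. \<exists>\<tau> F y. (\<tau>, F, y) \<in> set xs \<and> C \<in> components V F \<and> \<not> active t \<tau> C}"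

definition prune_step :: "'a set set \<Rightarrow> 'a set set \<Rightarrow> 'a set set \<Rightarrow> 'a set set \<Rightarrow> bool" where
  "prune_step E D F F' \<longleftrightarrow> (\<exists>S\<in>D. \<exists>e. card (delta E S \<inter> F) = 1 \<and> e \<in> delta E S \<inter> F \<and> F' = F - {e})"

text \<open>F_out and y are an output forest and the final growth values of shadow
  moat growing on (G,t) (for some tie-breaking and some pruning order).\<close>
definition smg_output :: "'a set \<Rightarrow> 'a set set \<Rightarrow> ('a set \<Rightarrow> real) \<Rightarrow> ('a \<Rightarrow> real)
    \<Rightarrow> 'a set set \<Rightarrow> ('a set \<Rightarrow> real) \<Rightarrow> bool" where
  "smg_output V E c t Fout yout \<longleftrightarrow> (\<exists>xs \<tau> F.
     smg_run V E c t xs \<and> last xs = (\<tau>, F, yout)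
     \<and> (prune_step E (inactive_family V t xs))\<^sup>*\<^sup>* F Fout
     \<and> (\<forall>S\<in>inactive_family V t xs. card (delta E S \<inter> Fout) \<noteq> 1))"

end

theory Submission
  imports Defs
begin


definition rel :: "'a set set \<Rightarrow> ('a \<times> 'a) set" where
  "rel X = {(a,b). {a,b} \<in> X}"

lemma comp_rel: "comp V X z = {w\<in>V. (z,w) \<in> (rel X)\<^sup>*}"
  by (simp add: comp_def rel_def)

lemma sym_rel: "sym (rel X)"
  by (auto simp: sym_def rel_def insert_commute)

lemma rtr_sym: "(a,b) \<in> (rel X)\<^sup>* \<Longrightarrow> (b,a) \<in> (rel X)\<^sup>*"
  by (meson sym_rel sym_rtrancl symD)

lemma comp_self: "z \<in> V \<Longrightarrow> z \<in> comp V X z"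
  by (simp add: comp_rel)

lemma comp_sub: "comp V X z \<subseteq> V"
  by (auto simp: comp_rel)

lemma comp_eq: "a \<in> comp V X z \<Longrightarrow> comp V X a = comp V X z"
proof -
  assume "a \<in> comp V X z"
  then have h: "(z,a) \<in> (rel X)\<^sup>*" by (simp add: comp_rel)
  then have h': "(a,z) \<in> (rel X)\<^sup>*" by (rule rtr_sym)
  show ?thesis unfolding comp_rel
  proof (intro Collect_cong conj_cong refl iffI)
    fix x assume "(a,x) \<in> (rel X)\<^sup>*" then show "(z,x) \<in> (rel X)\<^sup>*" using h by (rule rtrancl_trans[rotated])
  next
    fix x assume "(z,x) \<in> (rel X)\<^sup>*" then show "(a,x) \<in> (rel X)\<^sup>*" using h' by (rule rtrancl_trans[rotated])
  qed
qed

lemma comp_of_mem: "C \<in> components V X \<Longrightarrow> x \<in> C \<Longrightarrow> C = comp V X x"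
proof -
  assume "C \<in> components V X" "x \<in> C"
  then obtain z where "C = comp V X z" by (auto simp: components_def)
  with \<open>x \<in> C\<close> show ?thesis using comp_eq[of x V X z] by simp
qed

lemma comps_disj: "C \<in> components V X \<Longrightarrow> D \<in> components V X \<Longrightarrow> x \<in> C \<Longrightarrow> x \<in> D \<Longrightarrow> C = D"
proof -
  assume a: "C \<in> components V X" "D \<in> components V X" "x \<in> C" "x \<in> D"
  show ?thesis using comp_of_mem[OF a(1,3)] comp_of_mem[OF a(2,4)] by simp
qed

lemma comps_sub: "C \<in> components V X \<Longrightarrow> C \<subseteq> V"
  unfolding components_def comp_def by auto

lemma comps_finite: "finite V \<Longrightarrow> finite (components V X)"
  unfolding components_def by simp

lemma edge_same_comp: "{u,w} \<in> X \<Longrightarrow> u \<in> V \<Longrightarrow> w \<in> V \<Longrightarrow> comp V X u = comp V X w"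
proof -
  assume a: "{u,w} \<in> X" "u \<in> V" "w \<in> V"
  then have "(u,w) \<in> (rel X)\<^sup>*" by (auto simp: rel_def)
  then have "w \<in> comp V X u" using a by (simp add: comp_rel)
  then show ?thesis using comp_eq[of w V X u] by simp
qed

lemma edge_not_delta:
  assumes "{u,w} \<in> X" "u \<in> V" "w \<in> V" "u \<noteq> w" "C \<in> components V X"
  shows "{u,w} \<notin> delta E C"
proof -
  obtain z where z: "z \<in> V" "C = comp V X z" using assms(5) by (auto simp: components_def)
  have "u \<in> C \<longleftrightarrow> w \<in> C"
  proof -
    have "u \<in> C \<longleftrightarrow> comp V X u = C" using z comp_eq[of u V X z] comp_self[OF assms(2), of X] by auto
    moreover have "w \<in> C \<longleftrightarrow> comp V X w = C" using z comp_eq[of w V X z] comp_self[OF assms(3), of X] by auto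
    ultimately show ?thesis using edge_same_comp[OF assms(1-3)] by simp
  qed
  then have "{u,w} \<inter> C = {} \<or> {u,w} \<inter> C = {u,w}" by blast
  then have "card ({u,w} \<inter> C) = 0 \<or> card ({u,w} \<inter> C) = 2" using assms(4) by auto
  then show ?thesis unfolding delta_def by auto
qed

lemma rel_insert: "rel (insert {u,w} X) = rel X \<union> {(u,w),(w,u)}"
  by (auto simp: rel_def doubleton_eq_iff)

lemma rtr_insert:
  "(a,b) \<in> (R \<union> {(u,w),(w,u)})\<^sup>* \<longleftrightarrow>
   (a,b) \<in> R\<^sup>* \<or> ((a,u) \<in> R\<^sup>* \<and> (w,b) \<in> R\<^sup>*) \<or> ((a,w) \<in> R\<^sup>* \<and> (u,b) \<in> R\<^sup>*)"
proof
  assume "(a,b) \<in> (R \<union> {(u,w),(w,u)})\<^sup>*"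
  then show "(a,b) \<in> R\<^sup>* \<or> ((a,u) \<in> R\<^sup>* \<and> (w,b) \<in> R\<^sup>*) \<or> ((a,w) \<in> R\<^sup>* \<and> (u,b) \<in> R\<^sup>*)"
  proof (induction b rule: rtrancl_induct)
    case base then show ?case by simp
  next
    case (step b c)
    from step.hyps(2) step.IH show ?case
      by (auto intro: rtrancl_into_rtrancl)
  qed
next
  have sub: "R\<^sup>* \<subseteq> (R \<union> {(u,w),(w,u)})\<^sup>*" by (rule rtrancl_mono) blast
  have uw: "(u,w) \<in> (R \<union> {(u,w),(w,u)})\<^sup>*" "(w,u) \<in> (R \<union> {(u,w),(w,u)})\<^sup>*" by auto
  assume "(a,b) \<in> R\<^sup>* \<or> ((a,u) \<in> R\<^sup>* \<and> (w,b) \<in> R\<^sup>*) \<or> ((a,w) \<in> R\<^sup>* \<and> (u,b) \<in> R\<^sup>*)"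
  then show "(a,b) \<in> (R \<union> {(u,w),(w,u)})\<^sup>*"
    using sub uw by (meson rtrancl_trans subsetD)
qed

lemma comp_insert:
  assumes "u \<in> V" "w \<in> V" "z \<in> V"
  shows "comp V (insert {u,w} X) z =
    (if z \<in> comp V X u \<union> comp V X w then comp V X u \<union> comp V X w else comp V X z)"
proof -
  let ?R = "rel X"
  have s: "\<And>a b. (a,b) \<in> ?R\<^sup>* \<Longrightarrow> (b,a) \<in> ?R\<^sup>*" by (rule rtr_sym)
  have ch: "comp V (insert {u,w} X) z = {x\<in>V. (z,x) \<in> ?R\<^sup>* \<or> ((z,u) \<in> ?R\<^sup>* \<and> (w,x) \<in> ?R\<^sup>*) \<or> ((z,w) \<in> ?R\<^sup>* \<and> (u,x) \<in> ?R\<^sup>*)}"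
    by (simp only: comp_rel rel_insert rtr_insert)
  have cu: "comp V X u = {x\<in>V. (u,x) \<in> ?R\<^sup>*}" and cw: "comp V X w = {x\<in>V. (w,x) \<in> ?R\<^sup>*}"
    and cz: "comp V X z = {x\<in>V. (z,x) \<in> ?R\<^sup>*}" by (simp_all only: comp_rel)
  show ?thesis
  proof (cases "z \<in> comp V X u \<union> comp V X w")
    case True
    then have "(u,z) \<in> ?R\<^sup>* \<or> (w,z) \<in> ?R\<^sup>*" by (auto simp: cu cw)
    then show ?thesis
    proof
      assume h: "(u,z) \<in> ?R\<^sup>*"
      then have h': "(z,u) \<in> ?R\<^sup>*" by (rule s)
      have "{x\<in>V. (z,x) \<in> ?R\<^sup>* \<or> ((z,u) \<in> ?R\<^sup>* \<and> (w,x) \<in> ?R\<^sup>*) \<or> ((z,w) \<in> ?R\<^sup>* \<and> (u,x) \<in> ?R\<^sup>*)}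
          = {x\<in>V. (u,x) \<in> ?R\<^sup>*} \<union> {x\<in>V. (w,x) \<in> ?R\<^sup>*}"
        using h h' by (auto intro: rtrancl_trans[OF h] rtrancl_trans[OF h'])
      then show ?thesis using True ch cu cw by simp
    next
      assume h: "(w,z) \<in> ?R\<^sup>*"
      then have h': "(z,w) \<in> ?R\<^sup>*" by (rule s)
      have "{x\<in>V. (z,x) \<in> ?R\<^sup>* \<or> ((z,u) \<in> ?R\<^sup>* \<and> (w,x) \<in> ?R\<^sup>*) \<or> ((z,w) \<in> ?R\<^sup>* \<and> (u,x) \<in> ?R\<^sup>*)}
          = {x\<in>V. (u,x) \<in> ?R\<^sup>*} \<union> {x\<in>V. (w,x) \<in> ?R\<^sup>*}"
        using h h' by (auto intro: rtrancl_trans[OF h] rtrancl_trans[OF h'])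
      then show ?thesis using True ch cu cw by simp
    qed
  next
    case False
    then have "(u,z) \<notin> ?R\<^sup>*" "(w,z) \<notin> ?R\<^sup>*" using assms by (auto simp: cu cw)
    then have "(z,u) \<notin> ?R\<^sup>*" "(z,w) \<notin> ?R\<^sup>*" using s by blast+
    then show ?thesis unfolding ch using False cz by simp
  qed
qed

lemma comp_in_comps: "z \<in> V \<Longrightarrow> comp V X z \<in> components V X"
  by (simp add: components_def)

lemma mem_comp_eq: "x \<in> comp V X z \<Longrightarrow> comp V X z = comp V X x"
  using comp_eq by metis

lemma comps_insert:
  assumes "u \<in> V" "w \<in> V"
  shows "components V (insert {u,w} X) =
    insert (comp V X u \<union> comp V X w) (components V X - {comp V X u, comp V X w})"
    (is "?L = insert (?Cu \<union> ?Cw) (?K - {?Cu, ?Cw})")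
proof
  show "?L \<subseteq> insert (?Cu \<union> ?Cw) (?K - {?Cu, ?Cw})"
  proof
    fix C assume "C \<in> ?L"
    then obtain x where x: "x \<in> V" "C = comp V (insert {u,w} X) x" by (auto simp: components_def)
    show "C \<in> insert (?Cu \<union> ?Cw) (?K - {?Cu, ?Cw})"
    proof (cases "x \<in> ?Cu \<union> ?Cw")
      case True then show ?thesis using x comp_insert[OF assms x(1)] by simp
    next
      case False
      have "x \<in> comp V X x" by (rule comp_self[OF x(1)])
      then have "comp V X x \<noteq> ?Cu" "comp V X x \<noteq> ?Cw" using False by auto
      then show ?thesis using x comp_insert[OF assms x(1)] False comp_in_comps[OF x(1)] by simp
    qed
  qed
next
  show "insert (?Cu \<union> ?Cw) (?K - {?Cu, ?Cw}) \<subseteq> ?L"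
  proof
    fix C assume C: "C \<in> insert (?Cu \<union> ?Cw) (?K - {?Cu, ?Cw})"
    show "C \<in> ?L"
    proof (cases "C = ?Cu \<union> ?Cw")
      case True
      have "u \<in> ?Cu" by (rule comp_self[OF assms(1)])
      then have "comp V (insert {u,w} X) u = C" using True comp_insert[OF assms assms(1)] by simp
      then show ?thesis using assms(1) by (auto simp: components_def)
    next
      case False
      then have C2: "C \<in> ?K" "C \<noteq> ?Cu" "C \<noteq> ?Cw" using C by auto
      then obtain x where x: "x \<in> V" "C = comp V X x" by (auto simp: components_def)
      have "x \<notin> ?Cu"
      proof
        assume "x \<in> ?Cu" then have "?Cu = comp V X x" by (rule mem_comp_eq)
        then show False using C2 x by simp
      qed
      moreover have "x \<notin> ?Cw"
      proof
        assume "x \<in> ?Cw" then have "?Cw = comp V X x" by (rule mem_comp_eq)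
        then show False using C2 x by simp
      qed
      ultimately have "comp V (insert {u,w} X) x = C" using x comp_insert[OF assms x(1)] by simp
      then show ?thesis using x(1) by (auto simp: components_def)
    qed
  qed
qed

lemma card_comps_insert:
  assumes "finite V" "u \<in> V" "w \<in> V"
  shows "card (components V (insert {u,w} X)) =
    (if comp V X u = comp V X w then card (components V X) else card (components V X) - 1)"
proof -
  let ?Cu = "comp V X u" and ?Cw = "comp V X w" and ?K = "components V X"
  have fin: "finite ?K" using assms(1) by (rule comps_finite)
  have inu: "?Cu \<in> ?K" and inw: "?Cw \<in> ?K" using assms(2,3) by (simp_all add: comp_in_comps)
  show ?thesis
  proof (cases "?Cu = ?Cw")
    case True
    then have "insert (?Cu \<union> ?Cw) (?K - {?Cu, ?Cw}) = ?K" using inu by auto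
    then show ?thesis using True comps_insert[OF assms(2,3)] by simp
  next
    case False
    have "?Cu \<union> ?Cw \<notin> ?K - {?Cu, ?Cw}"
    proof
      assume h: "?Cu \<union> ?Cw \<in> ?K - {?Cu, ?Cw}"
      have "u \<in> ?Cu \<union> ?Cw" using comp_self[OF assms(2)] by simp
      moreover have "u \<in> ?Cu" using comp_self[OF assms(2)] by simp
      ultimately have "?Cu \<union> ?Cw = ?Cu" using comps_disj[of "?Cu \<union> ?Cw" V X ?Cu u] h inu by auto
      then show False using h by auto
    qed
    then have "card (insert (?Cu \<union> ?Cw) (?K - {?Cu, ?Cw})) = card (?K - {?Cu, ?Cw}) + 1"
      using fin by simp
    moreover have "card (?K - {?Cu, ?Cw}) = card ?K - 2"
      using fin inu inw False by (simp add: card_Diff_subset)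
    moreover have "card ?K \<ge> 2"
    proof -
      have "{?Cu, ?Cw} \<subseteq> ?K" using inu inw by simp
      then have "card {?Cu, ?Cw} \<le> card ?K" using fin by (simp add: card_mono)
      then show ?thesis using False by simp
    qed
    ultimately show ?thesis using False comps_insert[OF assms(2,3)] by simp
  qed
qed

lemma comps_empty: "components V {} = (\<lambda>z. {z}) ` V"
proof -
  have "comp V {} z = {z}" if "z \<in> V" for z
    using that by (auto simp: comp_rel rel_def)
  then show ?thesis unfolding components_def by simp
qed

lemma card_comps_empty: "card (components V {}) = card V"
  unfolding comps_empty by (simp add: card_image)



definition gedge :: "'a set \<Rightarrow> 'a set \<Rightarrow> bool" where
  "gedge V e \<longleftrightarrow> (\<exists>u w. u \<in> V \<and> w \<in> V \<and> u \<noteq> w \<and> e = {u,w})"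

lemma card_comps_insert_ge:
  assumes "finite V" "gedge V e"
  shows "card (components V X) \<le> card (components V (insert e X)) + 1"
proof -
  obtain u w where uw: "u \<in> V" "w \<in> V" "e = {u,w}" using assms(2) by (auto simp: gedge_def)
  show ?thesis using card_comps_insert[OF assms(1) uw(1,2), of X] uw(3) by auto
qed

lemma card_comps_union:
  assumes "finite V" "finite Y" "\<forall>e\<in>Y. gedge V e"
  shows "card (components V X) \<le> card (components V (X \<union> Y)) + card Y"
  using assms(2,3)
proof (induction Y rule: finite_induct)
  case empty then show ?case by simp
next
  case (insert e Y)
  have "card (components V (X \<union> Y)) \<le> card (components V (insert e (X \<union> Y))) + 1"
    using card_comps_insert_ge[OF assms(1)] insert.prems by simp
  then show ?case using insert by simp
qed

lemma cross_merge:
  assumes "finite V" "gedge V e" "cross V E X e"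
  shows "e \<notin> X" "card (components V (insert e X)) + 1 = card (components V X)"
proof -
  obtain u w where uw: "u \<in> V" "w \<in> V" "u \<noteq> w" "e = {u,w}" using assms(2) by (auto simp: gedge_def)
  have ne: "comp V X u \<noteq> comp V X w"
  proof
    assume h: "comp V X u = comp V X w"
    have "u \<in> comp V X u" "w \<in> comp V X u" using comp_self[OF uw(1), of X] comp_self[OF uw(2), of X] h by auto
    then have "e \<subseteq> comp V X u" using uw by simp
    moreover have "comp V X u \<in> components V X" using uw by (simp add: comp_in_comps)
    ultimately show False using assms(3) by (auto simp: cross_def)
  qed
  show "e \<notin> X"
  proof
    assume "e \<in> X" then show False using edge_same_comp[of u w X V] uw ne by simp
  qed
  have "comp V X u \<in> components V X" using uw by (simp add: comp_in_comps)
  then have "card (components V X) \<ge> 1" using comps_finite[OF assms(1), of X]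
    by (metis One_nat_def Suc_leI card_gt_0_iff empty_iff)
  then show "card (components V (insert e X)) + 1 = card (components V X)"
    using card_comps_insert[OF assms(1) uw(1,2), of X] uw(4) ne by simp
qed

lemma forest_bound:
  assumes "finite V" "X \<subseteq> Ff" "finite Ff" "\<forall>e\<in>Ff. gedge V e"
    "card Ff + card (components V Ff) = card V"
  shows "card X + card (components V X) \<le> card V"
proof -
  have "card (components V X) \<le> card (components V (X \<union> (Ff - X))) + card (Ff - X)"
    using card_comps_union[OF assms(1), of "Ff - X" X] assms(3,4) by simp
  moreover have "X \<union> (Ff - X) = Ff" using assms(2) by auto
  moreover have "card (Ff - X) = card Ff - card X" using assms(2,3) by (simp add: card_Diff_subset finite_subset)
  moreover have "card X \<le> card Ff" using assms(2,3) by (simp add: card_mono)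
  ultimately show ?thesis using assms(5) by simp
qed



lemma deg_sum_bound:
  assumes "finite V" "Fo \<subseteq> E" "finite E" "\<forall>e\<in>E. gedge V e"
  shows "(\<Sum>C\<in>components V F. card (delta E C \<inter> Fo)) \<le> 2 * card (Fo - F)"
proof -
  let ?K = "components V F"
  have finK: "finite ?K" using assms(1) by (rule comps_finite)
  have finFo: "finite Fo" using assms(2,3) by (rule finite_subset)
  have "(\<Sum>C\<in>?K. card (delta E C \<inter> Fo)) = (\<Sum>C\<in>?K. \<Sum>e\<in>Fo. if e \<in> delta E C then 1 else 0)"
  proof (rule sum.cong[OF refl])
    fix C
    have "delta E C \<inter> Fo = {e\<in>Fo. e \<in> delta E C}" by auto
    then show "card (delta E C \<inter> Fo) = (\<Sum>e\<in>Fo. if e \<in> delta E C then 1 else 0)"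
      using finFo by (simp add: sum.inter_filter[symmetric])
  qed
  also have "\<dots> = (\<Sum>e\<in>Fo. \<Sum>C\<in>?K. if e \<in> delta E C then 1 else 0)" by (rule sum.swap)
  also have "\<dots> = (\<Sum>e\<in>Fo. card {C\<in>?K. e \<in> delta E C})"
    using finK by (simp add: sum.inter_filter[symmetric])
  also have "\<dots> \<le> (\<Sum>e\<in>Fo. if e \<in> F then 0 else 2)"
  proof (rule sum_mono)
    fix e assume e: "e \<in> Fo"
    obtain u w where uw: "u \<in> V" "w \<in> V" "u \<noteq> w" "e = {u,w}"
    proof -
      have "gedge V e" using assms(2,4) e by auto
      then show ?thesis using that unfolding gedge_def by blast
    qed
    show "card {C\<in>?K. e \<in> delta E C} \<le> (if e \<in> F then 0 else 2)"
    proof (cases "e \<in> F")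
      case True
      have h: "{C\<in>?K. e \<in> delta E C} = {}" using edge_not_delta[of u w F V _ E] uw True by blast
      show ?thesis using True by (subst h) simp
    next
      case False
      have "{C\<in>?K. e \<in> delta E C} \<subseteq> {comp V F u, comp V F w}"
      proof
        fix C assume C: "C \<in> {C\<in>?K. e \<in> delta E C}"
        then have "card (e \<inter> C) = 1" by (simp add: delta_def)
        have CK: "C \<in> ?K" using C by simp
        have "u \<in> C \<or> w \<in> C"
        proof (rule ccontr)
          assume "\<not> (u \<in> C \<or> w \<in> C)"
          then have "e \<inter> C = {}" using uw by auto
          then show False using \<open>card (e \<inter> C) = 1\<close> by simp
        qed
        then show "C \<in> {comp V F u, comp V F w}"
        proof
          assume "u \<in> C" then show ?thesis using comp_of_mem[OF CK] by simp
        next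
          assume "w \<in> C" then show ?thesis using comp_of_mem[OF CK] by simp
        qed
      qed
      then have "card {C\<in>?K. e \<in> delta E C} \<le> card {comp V F u, comp V F w}"
        by (simp add: card_mono)
      also have "\<dots> \<le> 2" by (simp add: card_insert_if)
      finally show ?thesis using False by simp
    qed
  qed
  also have "\<dots> = 2 * card (Fo - F)"
  proof -
    have "(\<Sum>e\<in>Fo. if e \<in> F then 0 else 2) = (\<Sum>e\<in>Fo. if e \<notin> F then 2 else (0::nat))"
      by (rule sum.cong) auto
    also have "\<dots> = (\<Sum>e\<in>{e\<in>Fo. e \<notin> F}. 2)" using finFo by (rule sum.inter_filter[symmetric])
    also have "{e\<in>Fo. e \<notin> F} = Fo - F" by auto
    finally have "(\<Sum>e\<in>Fo. if e \<in> F then 0 else 2) = (\<Sum>e\<in>Fo - F. (2::nat))" .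
    then show ?thesis by simp
  qed
  finally show ?thesis .
qed



lemma iso_comp:
  assumes "finite E" "Fo \<subseteq> E" "F \<subseteq> E" "\<forall>e\<in>E. gedge V e" "z \<in> V"
    "card (delta E (comp V F z) \<inter> Fo) = 0"
  shows "comp V (F \<union> Fo) z = comp V F z"
proof -
  let ?C = "comp V F z"
  have finD: "finite (delta E ?C \<inter> Fo)" using assms(1) by (simp add: delta_def)
  have nod: "delta E ?C \<inter> Fo = {}" using assms(6) finD by simp
  have reach: "x \<in> ?C" if "(z,x) \<in> (rel (F \<union> Fo))\<^sup>*" for x
    using that
  proof (induction x rule: rtrancl_induct)
    case base then show ?case using comp_self[OF assms(5)] by simp
  next
    case (step x y)
    then have xy: "{x,y} \<in> F \<union> Fo" by (simp add: rel_def)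
    then have "gedge V {x,y}" using assms(2-4) by auto
    then obtain a b where ab: "a \<in> V" "b \<in> V" "a \<noteq> b" "{x,y} = {a,b}" by (auto simp: gedge_def)
    then have yV: "y \<in> V" and xny: "x \<noteq> y" by (auto simp: doubleton_eq_iff)
    show ?case
    proof (cases "{x,y} \<in> F")
      case True
      have "(z,x) \<in> (rel F)\<^sup>*" using step.IH by (simp add: comp_rel)
      moreover have "(x,y) \<in> rel F" using True by (simp add: rel_def)
      ultimately have "(z,y) \<in> (rel F)\<^sup>*" by simp
      then show ?thesis using yV by (simp add: comp_rel)
    next
      case False
      then have fo: "{x,y} \<in> Fo" using xy by simp
      show ?thesis
      proof (rule ccontr)
        assume "y \<notin> ?C"
        then have "{x,y} \<inter> ?C = {x}" using step.IH by auto
        then have "{x,y} \<in> delta E ?C" using fo assms(2) by (auto simp: delta_def)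
        then show False using nod fo by auto
      qed
    qed
  qed
  have "rel F \<subseteq> rel (F \<union> Fo)" by (auto simp: rel_def)
  then have "(rel F)\<^sup>* \<subseteq> (rel (F \<union> Fo))\<^sup>*" by (rule rtrancl_mono)
  then have "?C \<subseteq> comp V (F \<union> Fo) z" by (auto simp: comp_rel)
  moreover have "comp V (F \<union> Fo) z \<subseteq> ?C"
  proof
    fix x assume "x \<in> comp V (F \<union> Fo) z"
    then have "(z,x) \<in> (rel (F \<union> Fo))\<^sup>*" by (simp add: comp_rel)
    then show "x \<in> ?C" by (rule reach)
  qed
  ultimately show ?thesis by blast
qed

lemma nonisolated_bound:
  assumes "finite V" "finite E" "\<forall>e\<in>E. gedge V e" "F \<subseteq> Ff" "Fo \<subseteq> Ff" "Ff \<subseteq> E"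
    "card Ff + card (components V Ff) = card V" "card F + card (components V F) = card V"
    "N = {C\<in>components V F. card (delta E C \<inter> Fo) \<noteq> 0}" "N \<noteq> {}"
  shows "card (Fo - F) + 1 \<le> card N"
proof -
  let ?K = "components V F" and ?X = "F \<union> Fo"
  let ?I = "?K - N"
  have finK: "finite ?K" using assms(1) by (rule comps_finite)
  have finFf: "finite Ff" using assms(2,6) finite_subset by blast
  have FE: "F \<subseteq> E" "Fo \<subseteq> E" using assms(4-6) by auto
  have b1: "card ?X + card (components V ?X) \<le> card V"
  proof (rule forest_bound[OF assms(1) _ finFf _ assms(7)])
    show "?X \<subseteq> Ff" using assms(4,5) by simp
    show "\<forall>e\<in>Ff. gedge V e" using assms(3,6) by blast
  qed
  have "card ?X = card F + card (Fo - F)"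
  proof -
    have "finite F" "finite (Fo - F)" using finFf assms(4,5) finite_subset by blast+
    then have e: "card (F \<union> (Fo - F)) = card F + card (Fo - F)" by (rule card_Un_disjoint) auto
    then show ?thesis by (simp only: Un_Diff_cancel)
  qed
  then have b2: "card (Fo - F) + card (components V ?X) \<le> card ?K" using b1 assms(8) by simp
  have IX: "?I \<subseteq> components V ?X"
  proof
    fix C assume C: "C \<in> ?I"
    then obtain z where z: "z \<in> V" "C = comp V F z" by (auto simp: components_def)
    have "card (delta E C \<inter> Fo) = 0" using C assms(9) by auto
    then have "comp V ?X z = C" using iso_comp[OF assms(2) FE(2,1) assms(3) z(1)] z(2) by simp
    then show "C \<in> components V ?X" using z(1) by (auto simp: components_def)
  qed
  obtain C where C: "C \<in> N" using assms(10) by blast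
  then obtain z where z: "z \<in> V" "C = comp V F z" using assms(9) by (auto simp: components_def)
  have Dn: "comp V ?X z \<notin> ?I"
  proof
    assume h: "comp V ?X z \<in> ?I"
    have "z \<in> comp V ?X z" using comp_self[OF z(1)] by simp
    moreover have "z \<in> C" using z comp_self by simp
    moreover have "C \<in> ?K" using C assms(9) by simp
    ultimately have "comp V ?X z = C" using h comps_disj[of "comp V ?X z" V F C z] by blast
    then show False using h C by simp
  qed
  have "insert (comp V ?X z) ?I \<subseteq> components V ?X" using IX z(1) by (auto simp: components_def)
  then have "card (insert (comp V ?X z) ?I) \<le> card (components V ?X)"
    using comps_finite[OF assms(1)] by (simp add: card_mono)
  then have "card ?I + 1 \<le> card (components V ?X)" using Dn finK by simp
  moreover have "card ?K = card ?I + card N"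
  proof -
    have "N \<subseteq> ?K" using assms(9) by auto
    moreover have "finite N" using finK \<open>N \<subseteq> ?K\<close> finite_subset by blast
    ultimately show ?thesis using finK card_Diff_subset[of N ?K] card_mono[of ?K N] by simp
  qed
  ultimately show ?thesis using b2 by simp
qed



lemma key_step:
  assumes "finite V" "finite E" "\<forall>e\<in>E. gedge V e" "F \<subseteq> Ff" "Fo \<subseteq> Ff" "Ff \<subseteq> E"
    "card Ff + card (components V Ff) = card V" "card F + card (components V F) = card V"
    "\<forall>C\<in>components V F. \<not> P C \<longrightarrow> card (delta E C \<inter> Fo) \<noteq> 1" "v \<in> V"
  shows "(\<Sum>C\<in>{C\<in>components V F. P C}. card (delta E C \<inter> Fo))
          \<le> 2 * card {C\<in>components V F. P C \<and> v \<notin> C}"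
proof -
  let ?K = "components V F"
  let ?A = "{C\<in>?K. P C}"
  define deg where "deg C = card (delta E C \<inter> Fo)" for C
  define N where "N = {C\<in>?K. deg C \<noteq> 0}"
  have finK: "finite ?K" using assms(1) by (rule comps_finite)
  have finA: "finite ?A" using finK by simp
  show ?thesis
  proof (cases "N = {}")
    case True
    then have "\<forall>C\<in>?A. deg C = 0" unfolding N_def by auto
    then have "(\<Sum>C\<in>?A. deg C) = 0" by simp
    then show ?thesis unfolding deg_def by simp
  next
    case False
    have N_def': "N = {C\<in>?K. card (delta E C \<inter> Fo) \<noteq> 0}" unfolding N_def deg_def by simp
    have nb: "card (Fo - F) + 1 \<le> card N"
      using nonisolated_bound[OF assms(1-8) N_def' False] .
    have FoE: "Fo \<subseteq> E" using assms(5,6) by simp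
    have db: "(\<Sum>C\<in>?K. deg C) \<le> 2 * card (Fo - F)"
      unfolding deg_def using deg_sum_bound[OF assms(1) FoE assms(2,3)] .
    have split: "(\<Sum>C\<in>?K. deg C) = (\<Sum>C\<in>?K - ?A. deg C) + (\<Sum>C\<in>?A. deg C)"
      by (rule sum.subset_diff) (auto simp: finK)
    let ?B = "(?K - ?A) \<inter> N"
    have finB: "finite ?B" using finK by simp
    have "2 * card ?B = (\<Sum>C\<in>?B. 2)" by simp
    also have "\<dots> \<le> (\<Sum>C\<in>?B. deg C)"
    proof (rule sum_mono)
      fix C assume C: "C \<in> ?B"
      then have "deg C \<noteq> 0" unfolding N_def by simp
      moreover have "deg C \<noteq> 1" using C assms(9) unfolding deg_def by auto
      ultimately show "2 \<le> deg C" by simp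
    qed
    also have "\<dots> \<le> (\<Sum>C\<in>?K - ?A. deg C)"
      using finK by (intro sum_mono2) auto
    finally have inact: "2 * card ?B \<le> (\<Sum>C\<in>?K - ?A. deg C)" .
    have cN: "card N = card (N \<inter> ?A) + card ?B"
    proof -
      have "N = (N \<inter> ?A) \<union> ?B" unfolding N_def by auto
      moreover have "finite (N \<inter> ?A)" using finA by simp
      moreover have "(N \<inter> ?A) \<inter> ?B = {}" by auto
      ultimately show ?thesis using finB card_Un_disjoint[of "N \<inter> ?A" ?B] by simp
    qed
    have cA: "card (N \<inter> ?A) \<le> card {C\<in>?K. P C \<and> v \<notin> C} + 1"
    proof -
      have "N \<inter> ?A \<subseteq> insert (comp V F v) {C\<in>?K. P C \<and> v \<notin> C}"
      proof
        fix C assume C: "C \<in> N \<inter> ?A"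
        show "C \<in> insert (comp V F v) {C\<in>?K. P C \<and> v \<notin> C}"
        proof (cases "v \<in> C")
          case True
          have "C \<in> ?K" using C by simp
          then have "C = comp V F v" using True by (rule comp_of_mem)
          then show ?thesis by simp
        next
          case False then show ?thesis using C by simp
        qed
      qed
      then have "card (N \<inter> ?A) \<le> card (insert (comp V F v) {C\<in>?K. P C \<and> v \<notin> C})"
        using finK by (intro card_mono) auto
      also have "\<dots> \<le> card {C\<in>?K. P C \<and> v \<notin> C} + 1"
        using finK by (simp add: card_insert_if)
      finally show ?thesis .
    qed
    have "(\<Sum>C\<in>?A. deg C) \<le> 2 * card {C\<in>?K. P C \<and> v \<notin> C}"
      using nb db split inact cN cA by linarith
    then show ?thesis unfolding deg_def by simp
  qed
qed



definition inv_st :: "'a set \<Rightarrow> 'a set set \<Rightarrow> ('a set \<Rightarrow> real) \<Rightarrow> 'a smg_state \<Rightarrow> bool" where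
  "inv_st V E c st = (case st of (\<tau>, F, y) \<Rightarrow>
     F \<subseteq> E \<and> card F + card (components V F) = card V \<and> (\<forall>e\<in>F. load V E y e = c e))"

lemma graph_facts:
  assumes "is_graph V E"
  shows "finite V" "finite E" "\<forall>e\<in>E. gedge V e"
proof -
  show fV: "finite V" using assms by (simp add: is_graph_def)
  have "E \<subseteq> Pow V" using assms by (auto simp: is_graph_def)
  then show "finite E" using fV finite_subset by blast
  show "\<forall>e\<in>E. gedge V e" using assms by (auto simp: is_graph_def gedge_def)
qed

lemma load_grow_same:
  assumes "{u,w} \<in> F" "u \<in> V" "w \<in> V" "u \<noteq> w"
    "y' = (\<lambda>S. if S \<in> components V F \<and> active t \<tau> S then y S + d else y S)"
  shows "load V E y' {u,w} = load V E y {u,w}"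
  unfolding load_def
proof (rule sum.cong[OF refl])
  fix S assume S: "S \<in> {S. S \<subseteq> V \<and> {u,w} \<in> delta E S}"
  have "S \<notin> components V F" using S edge_not_delta[OF assms(1-4), of _ E] by auto
  then show "y' S = y S" using assms(5) by simp
qed

lemma inv_step:
  assumes g: "is_graph V E" and i: "inv_st V E c st" and s: "smg_step V E c t st st'"
  shows "inv_st V E c st'"
  using s
proof cases
  case (grow d F \<tau> y y')
  have "\<forall>e\<in>F. load V E y' e = c e"
  proof
    fix e assume e: "e \<in> F"
    have FE: "F \<subseteq> E" using i grow by (simp add: inv_st_def)
    then obtain u w where uw: "u \<in> V" "w \<in> V" "u \<noteq> w" "e = {u,w}"
      using graph_facts(3)[OF g] e unfolding gedge_def by blast
    have "load V E y' e = load V E y e"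
      using load_grow_same[of u w F V y' t \<tau> y d E] uw e grow(7) by simp
    then show "load V E y' e = c e" using i grow e by (simp add: inv_st_def)
  qed
  then show ?thesis using i grow by (simp add: inv_st_def)
next
  case (merge y F e \<tau>)
  have cr: "cross V E F e" and ld: "load V E y e = c e" using merge(3) by (auto simp: tight_def)
  have eE: "e \<in> E" using cr by (simp add: cross_def)
  have ge: "gedge V e" using graph_facts(3)[OF g] eE by blast
  have cm: "e \<notin> F" "card (components V (insert e F)) + 1 = card (components V F)"
    using cross_merge[OF graph_facts(1)[OF g] ge cr] by auto
  have fF: "finite F" using i merge graph_facts(2)[OF g] finite_subset by (auto simp: inv_st_def)
  show ?thesis using i merge cm fF eE ld by (simp add: inv_st_def)
qed

lemma mono_step:
  assumes "smg_step V E c t st st'"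
  shows "fst (snd st) \<subseteq> fst (snd st')"
  using assms by cases auto

lemma inv_run:
  assumes g: "is_graph V E" and r: "smg_run V E c t xs"
  shows "\<forall>i<length xs. inv_st V E c (xs ! i)"
proof (intro allI impI)
  fix i assume "i < length xs"
  then show "inv_st V E c (xs ! i)"
  proof (induction i)
    case 0
    have "xs \<noteq> []" "hd xs = (0, {}, \<lambda>S. 0)" using r by (simp_all add: smg_run_def)
    then have "xs ! 0 = (0, {}, \<lambda>S. 0)" by (simp add: hd_conv_nth[symmetric])
    then show ?case by (simp add: inv_st_def card_comps_empty)
  next
    case (Suc i)
    then have "smg_step V E c t (xs ! i) (xs ! Suc i)" using r by (simp add: smg_run_def)
    then show ?case using Suc inv_step[OF g] by simp
  qed
qed

lemma mono_run:
  assumes r: "smg_run V E c t xs" and i: "i < length xs"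
  shows "fst (snd (xs ! i)) \<subseteq> fst (snd (last xs))"
proof -
  have "\<forall>j. i + j < length xs \<longrightarrow> fst (snd (xs ! i)) \<subseteq> fst (snd (xs ! (i + j)))"
  proof
    fix j show "i + j < length xs \<longrightarrow> fst (snd (xs ! i)) \<subseteq> fst (snd (xs ! (i + j)))"
    proof (induction j)
      case 0 then show ?case by simp
    next
      case (Suc j)
      show ?case
      proof
        assume h: "i + Suc j < length xs"
        then have "smg_step V E c t (xs ! (i + j)) (xs ! Suc (i + j))" using r by (simp add: smg_run_def)
        then have "fst (snd (xs ! (i + j))) \<subseteq> fst (snd (xs ! (i + Suc j)))" using mono_step by simp
        then show "fst (snd (xs ! i)) \<subseteq> fst (snd (xs ! (i + Suc j)))" using Suc h by auto
      qed
    qed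
  qed
  then have h0: "i + (length xs - 1 - i) < length xs \<longrightarrow> fst (snd (xs ! i)) \<subseteq> fst (snd (xs ! (i + (length xs - 1 - i))))" by (rule spec)
  have "i + (length xs - 1 - i) < length xs" using i by simp
  with h0 have h: "fst (snd (xs ! i)) \<subseteq> fst (snd (xs ! (i + (length xs - 1 - i))))" by blast
  have "xs \<noteq> []" using r by (simp add: smg_run_def)
  then have "last xs = xs ! (i + (length xs - 1 - i))" using i by (simp add: last_conv_nth)
  then show ?thesis using h by simp
qed

lemma prune_sub:
  assumes "(prune_step E D)\<^sup>*\<^sup>* F F'"
  shows "F' \<subseteq> F"
  using assms
proof (induction rule: rtranclp_induct)
  case base then show ?case by simp
next
  case (step b c) then show ?case by (auto simp: prune_step_def)
qed



definition Phi :: "'a set \<Rightarrow> 'a set set \<Rightarrow> 'a set set \<Rightarrow> ('a set \<Rightarrow> real) \<Rightarrow> real" where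
  "Phi V E Fo y = (\<Sum>S\<in>Pow V. y S * real (card (delta E S \<inter> Fo)))"

definition Psi :: "'a set \<Rightarrow> 'a \<Rightarrow> ('a set \<Rightarrow> real) \<Rightarrow> real" where
  "Psi V v y = 2 * (\<Sum>S | S \<subseteq> V \<and> v \<notin> S. y S)"

lemma grow_incr:
  assumes fV: "finite V"
    and y': "y' = (\<lambda>S. if S \<in> components V F \<and> active t \<tau> S then y S + d else y S)"
  shows "Phi V E Fo y' = Phi V E Fo y + d * real (\<Sum>C\<in>{C\<in>components V F. active t \<tau> C}. card (delta E C \<inter> Fo))"
    "Psi V v y' = Psi V v y + 2 * d * real (card {C\<in>components V F. active t \<tau> C \<and> v \<notin> C})"
proof -
  let ?A = "{C\<in>components V F. active t \<tau> C}"
  let ?k = "\<lambda>S. real (card (delta E S \<inter> Fo))"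
  have AP: "?A \<subseteq> Pow V" using comps_sub by blast
  have finP: "finite (Pow V)" using fV by simp
  have "Phi V E Fo y' = (\<Sum>S\<in>Pow V. y S * ?k S + (if S \<in> ?A then d * ?k S else 0))"
    unfolding Phi_def y' by (rule sum.cong) (auto simp: algebra_simps)
  also have "\<dots> = Phi V E Fo y + (\<Sum>S\<in>Pow V. if S \<in> ?A then d * ?k S else 0)"
    by (simp add: sum.distrib Phi_def)
  also have "(\<Sum>S\<in>Pow V. if S \<in> ?A then d * ?k S else 0) = (\<Sum>S\<in>Pow V \<inter> ?A. d * ?k S)"
    using finP by (rule sum.inter_restrict[symmetric])
  also have "Pow V \<inter> ?A = ?A" using AP by blast
  also have "(\<Sum>S\<in>?A. d * ?k S) = d * real (\<Sum>C\<in>?A. card (delta E C \<inter> Fo))"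
    by (simp add: sum_distrib_left)
  finally show "Phi V E Fo y' = Phi V E Fo y + d * real (\<Sum>C\<in>?A. card (delta E C \<inter> Fo))" .
next
  let ?A = "{C\<in>components V F. active t \<tau> C}"
  let ?Q = "{S. S \<subseteq> V \<and> v \<notin> S}"
  have finQ: "finite ?Q" using fV by simp
  have "(\<Sum>S\<in>?Q. y' S) = (\<Sum>S\<in>?Q. y S + (if S \<in> ?A then d else 0))"
    unfolding y' by (rule sum.cong) auto
  also have "\<dots> = (\<Sum>S\<in>?Q. y S) + (\<Sum>S\<in>?Q. if S \<in> ?A then d else 0)"
    by (simp add: sum.distrib)
  also have "(\<Sum>S\<in>?Q. if S \<in> ?A then d else 0) = (\<Sum>S\<in>?Q \<inter> ?A. d)"
    using finQ by (rule sum.inter_restrict[symmetric])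
  also have "?Q \<inter> ?A = {C\<in>components V F. active t \<tau> C \<and> v \<notin> C}" using comps_sub by blast
  finally show "Psi V v y' = Psi V v y + 2 * d * real (card {C\<in>components V F. active t \<tau> C \<and> v \<notin> C})"
    unfolding Psi_def by (simp add: algebra_simps)
qed



lemma cost_Phi:
  assumes fV: "finite V" and fF: "finite F" and ld: "\<forall>e\<in>F. load V E y e = c e"
  shows "cost c F = Phi V E F y"
proof -
  have finP: "finite (Pow V)" using fV by simp
  have "cost c F = (\<Sum>e\<in>F. load V E y e)" unfolding cost_def using ld by simp
  also have "\<dots> = (\<Sum>e\<in>F. \<Sum>S\<in>Pow V. if e \<in> delta E S then y S else 0)"
  proof (rule sum.cong[OF refl])
    fix e
    have "{S. S \<subseteq> V \<and> e \<in> delta E S} = Pow V \<inter> {S. e \<in> delta E S}" by auto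
    then show "load V E y e = (\<Sum>S\<in>Pow V. if e \<in> delta E S then y S else 0)"
      unfolding load_def using sum.inter_restrict[OF finP, of y "{S. e \<in> delta E S}"] by simp
  qed
  also have "\<dots> = (\<Sum>S\<in>Pow V. \<Sum>e\<in>F. if e \<in> delta E S then y S else 0)" by (rule sum.swap)
  also have "\<dots> = Phi V E F y" unfolding Phi_def
  proof (rule sum.cong[OF refl])
    fix S
    have "(\<Sum>e\<in>F. if e \<in> delta E S then y S else 0) = (\<Sum>e\<in>F \<inter> delta E S. y S)"
      using sum.inter_restrict[OF fF, of "\<lambda>_. y S" "delta E S"] by simp
    also have "\<dots> = y S * real (card (delta E S \<inter> F))" by (simp add: Int_commute)
    finally show "(\<Sum>e\<in>F. if e \<in> delta E S then y S else 0) = y S * real (card (delta E S \<inter> F))" .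
  qed
  finally show ?thesis .
qed

theorem mainTheorem3:
  fixes V :: "'a set" and E :: "'a set set" and c :: "'a set \<Rightarrow> real" and t :: "'a \<Rightarrow> real"
    and F :: "'a set set" and y :: "'a set \<Rightarrow> real" and v :: 'a
  assumes "is_graph V E"
    and "\<forall>e\<in>E. c e \<ge> 0"
    and "\<forall>w\<in>V. t w \<ge> 0"
    and "smg_output V E c t F y"
    and "v \<in> V"
  shows "cost c F \<le> 2 * (\<Sum>S | S \<subseteq> V \<and> v \<notin> S. y S)"
proof -
  note g = assms(1)
  have fV: "finite V" and fE: "finite E" and ge: "\<forall>e\<in>E. gedge V e" using graph_facts[OF g] by auto
  obtain xs \<tau>f Ff where r: "smg_run V E c t xs" and lx: "last xs = (\<tau>f, Ff, y)"
    and pr: "(prune_step E (inactive_family V t xs))\<^sup>*\<^sup>* Ff F"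
    and fin: "\<forall>S\<in>inactive_family V t xs. card (delta E S \<inter> F) \<noteq> 1"
    using assms(4) unfolding smg_output_def by blast
  have ne: "xs \<noteq> []" using r by (simp add: smg_run_def)
  have FFf: "F \<subseteq> Ff" using pr by (rule prune_sub)
  have invs: "\<forall>i<length xs. inv_st V E c (xs ! i)" using inv_run[OF g r] .
  have "inv_st V E c (last xs)" using invs ne by (simp add: last_conv_nth)
  then have iF: "Ff \<subseteq> E" "card Ff + card (components V Ff) = card V" "\<forall>e\<in>Ff. load V E y e = c e"
    using lx by (simp_all add: inv_st_def)
  have fFf: "finite Ff" using iF(1) fE finite_subset by blast
  have fF: "finite F" using FFf fFf finite_subset by blast
  have pot: "\<forall>i<length xs. Phi V E F (snd (snd (xs ! i))) \<le> Psi V v (snd (snd (xs ! i)))"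
  proof (intro allI impI)
    fix i assume "i < length xs"
    then show "Phi V E F (snd (snd (xs ! i))) \<le> Psi V v (snd (snd (xs ! i)))"
    proof (induction i)
      case 0
      have "hd xs = (0, {}, \<lambda>S. 0)" using r by (simp add: smg_run_def)
      then have "xs ! 0 = (0, {}, \<lambda>S. 0)" using ne by (simp add: hd_conv_nth[symmetric])
      then show ?case by (simp add: Phi_def Psi_def)
    next
      case (Suc i)
      have il: "i < length xs" using Suc.prems by simp
      have IH: "Phi V E F (snd (snd (xs ! i))) \<le> Psi V v (snd (snd (xs ! i)))" using Suc il by simp
      have st: "smg_step V E c t (xs ! i) (xs ! Suc i)" using r Suc.prems by (simp add: smg_run_def)
      then show ?case
      proof cases
        case (grow d Fi \<tau> yi yi')
        have xi: "xs ! i = (\<tau>, Fi, yi)" and xs': "xs ! Suc i = (\<tau> + d, Fi, yi')" using grow by auto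
        have iv: "inv_st V E c (xs ! i)" using invs il by simp
        then have cFi: "card Fi + card (components V Fi) = card V" using xi by (simp add: inv_st_def)
        have FiFf: "Fi \<subseteq> Ff" using mono_run[OF r il] xi lx by simp
        have mem: "(\<tau>, Fi, yi) \<in> set xs" using nth_mem[OF il] xi by simp
        have inact: "\<forall>C\<in>components V Fi. \<not> active t \<tau> C \<longrightarrow> card (delta E C \<inter> F) \<noteq> 1"
        proof (intro ballI impI)
          fix C assume "C \<in> components V Fi" "\<not> active t \<tau> C"
          then have "C \<in> inactive_family V t xs" using mem unfolding inactive_family_def by blast
          then show "card (delta E C \<inter> F) \<noteq> 1" using fin by blast
        qed
        have k: "(\<Sum>C\<in>{C\<in>components V Fi. active t \<tau> C}. card (delta E C \<inter> F))
            \<le> 2 * card {C\<in>components V Fi. active t \<tau> C \<and> v \<notin> C}"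
          by (rule key_step[OF fV fE ge FiFf FFf iF(1) iF(2) cFi inact assms(5)])
        then have kr: "real (\<Sum>C\<in>{C\<in>components V Fi. active t \<tau> C}. card (delta E C \<inter> F))
            \<le> 2 * real (card {C\<in>components V Fi. active t \<tau> C \<and> v \<notin> C})"
        proof -
          have "real (\<Sum>C\<in>{C\<in>components V Fi. active t \<tau> C}. card (delta E C \<inter> F))
            \<le> real (2 * card {C\<in>components V Fi. active t \<tau> C \<and> v \<notin> C})"
            using k by (simp only: of_nat_le_iff)
          then show ?thesis by simp
        qed
        have "d * real (\<Sum>C\<in>{C\<in>components V Fi. active t \<tau> C}. card (delta E C \<inter> F))
            \<le> d * (2 * real (card {C\<in>components V Fi. active t \<tau> C \<and> v \<notin> C}))"
          using kr grow by (simp add: mult_left_mono)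
        moreover have ye: "yi' = (\<lambda>S. if S \<in> components V Fi \<and> active t \<tau> S then yi S + d else yi S)"
          using grow by simp
        moreover note grow_incr[OF fV ye]
        ultimately show ?thesis using IH xi xs' by (simp add: algebra_simps)
      next
        case (merge yi Fi e \<tau>)
        then show ?thesis using IH by simp
      qed
    qed
  qed
  have "Phi V E F y \<le> Psi V v y"
  proof -
    have "length xs - 1 < length xs" using ne by simp
    then have "Phi V E F (snd (snd (xs ! (length xs - 1)))) \<le> Psi V v (snd (snd (xs ! (length xs - 1))))"
      using pot by blast
    moreover have "xs ! (length xs - 1) = (\<tau>f, Ff, y)" using lx ne by (simp add: last_conv_nth)
    ultimately show ?thesis by simp
  qed
  moreover have "cost c F = Phi V E F y"
    using cost_Phi[OF fV fF] iF(3) FFf by blast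
  ultimately show ?thesis by (simp add: Psi_def)
qed

end
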